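(* Let $(V,\mu)$ be an infinite, connected, locally finite weighted graph, $q>1$, $\sigma\in\ell^+(V)$, $o\in V$. If $u\ge0$ on $V$ satisfies $-\Delta u\ge\sigma u^q$ in $V$, then for every integer $R\ge1$, $$u(o)^q\sigma(o)\mu(o)\le\Big(\frac q{q-1}\Big)^{\frac q{q-1}}\Big(\sum_{y\in V}g_{B_R}(o,y)^q\sigma(y)\mu(y)\Big)^{-\frac1{q-1}},$$ where $B_R=B(o,R)$.
   Context: Weighted graph: $\mu_{xy}=\mu_{yx}\ge0$, $\mu_{xy}>0$ iff $x\sim y$, $\mu(x)=\sum_{y\sim x}\mu_{xy}$; Laplacian $\Delta u(x)=\frac1{\mu(x)}\sum_{y\sim x}\mu_{xy}(u(y)-u(x))$. $d$ is the graph distance, $B(o,R)=\{x:d(o,x)\le R\}$. For finite $U\subset V$, $g_U(x,y)=\sum_{n\ge0}\mathbb P_x[X_n=y,n<\tau_U]/\mu(y)$ for $x,y\in U$ (and $0$ otherwise), where $(X_n)$ is the random walk with $P(x,y)=\mu_{xy}/\mu(x)$ and $\tau_U$ its first exit time from $U$. *)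

theory Defs
  imports "HOL-Analysis.Analysis"
begin

definition adj :: "('a \<Rightarrow> 'a \<Rightarrow> real) \<Rightarrow> 'a \<Rightarrow> 'a \<Rightarrow> bool" where
  "adj mu x y \<longleftrightarrow> mu x y > 0"

definition nbrs :: "('a \<Rightarrow> 'a \<Rightarrow> real) \<Rightarrow> 'a \<Rightarrow> 'a set" where
  "nbrs mu x = {y. adj mu x y}"

definition weighted_graph :: "('a \<Rightarrow> 'a \<Rightarrow> real) \<Rightarrow> bool" where
  "weighted_graph mu \<longleftrightarrow> (\<forall>x y. mu x y = mu y x \<and> mu x y \<ge> 0) \<and> (\<forall>x. mu x x = 0)"

definition locally_finite :: "('a \<Rightarrow> 'a \<Rightarrow> real) \<Rightarrow> bool" where
  "locally_finite mu \<longleftrightarrow> (\<forall>x. finite (nbrs mu x))"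

definition connected_graph :: "('a \<Rightarrow> 'a \<Rightarrow> real) \<Rightarrow> bool" where
  "connected_graph mu \<longleftrightarrow> (\<forall>x y. (adj mu)\<^sup>*\<^sup>* x y)"

definition vmeas :: "('a \<Rightarrow> 'a \<Rightarrow> real) \<Rightarrow> 'a \<Rightarrow> real" where
  "vmeas mu x = (\<Sum>y\<in>nbrs mu x. mu x y)"

definition laplacian :: "('a \<Rightarrow> 'a \<Rightarrow> real) \<Rightarrow> ('a \<Rightarrow> real) \<Rightarrow> 'a \<Rightarrow> real" where
  "laplacian mu u x = (1 / vmeas mu x) * (\<Sum>y\<in>nbrs mu x. mu x y * (u y - u x))"

definition gdist :: "('a \<Rightarrow> 'a \<Rightarrow> real) \<Rightarrow> 'a \<Rightarrow> 'a \<Rightarrow> nat" where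
  "gdist mu x y = (LEAST n. (adj mu ^^ n) x y)"

definition gball :: "('a \<Rightarrow> 'a \<Rightarrow> real) \<Rightarrow> 'a \<Rightarrow> nat \<Rightarrow> 'a set" where
  "gball mu x0 R = {x. gdist mu x0 x \<le> R}"

definition trans_prob :: "('a \<Rightarrow> 'a \<Rightarrow> real) \<Rightarrow> 'a \<Rightarrow> 'a \<Rightarrow> real" where
  "trans_prob mu x y = mu x y / vmeas mu x"

text \<open>killed_prob mu U n x y = P_x[X_n = y, n < tau_U], i.e. the probability that the
  random walk started at x stays in U at times 0..n and is at y at time n
  (sum over paths in U of products of transition probabilities).\<close>
fun killed_prob :: "('a \<Rightarrow> 'a \<Rightarrow> real) \<Rightarrow> 'a set \<Rightarrow> nat \<Rightarrow> 'a \<Rightarrow> 'a \<Rightarrow> real" where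
  "killed_prob mu U 0 x y = (if x \<in> U \<and> y = x then 1 else 0)"
| "killed_prob mu U (Suc n) x y =
     (if y \<in> U then (\<Sum>z\<in>U. killed_prob mu U n x z * trans_prob mu z y) else 0)"

definition green :: "('a \<Rightarrow> 'a \<Rightarrow> real) \<Rightarrow> 'a set \<Rightarrow> 'a \<Rightarrow> 'a \<Rightarrow> real" where
  "green mu U x y = (if x \<in> U \<and> y \<in> U
      then (\<Sum>n. killed_prob mu U n x y) / vmeas mu y else 0)"

end

theory Submission
  imports Defs
begin

lemma wg_sym: "weighted_graph mu \<Longrightarrow> mu x y = mu y x"
  by (simp add: weighted_graph_def)
lemma wg_nonneg: "weighted_graph mu \<Longrightarrow> mu x y \<ge> 0"
  by (simp add: weighted_graph_def)
lemma not_nbr_zero: "weighted_graph mu \<Longrightarrow> y \<notin> nbrs mu x \<Longrightarrow> mu x y = 0"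
  using wg_nonneg[of mu x y] by (auto simp: nbrs_def adj_def)
lemma adj_sym: "weighted_graph mu \<Longrightarrow> adj mu x y \<Longrightarrow> adj mu y x"
  by (simp add: adj_def wg_sym)

lemma has_nbr:
  assumes "weighted_graph mu" "infinite (UNIV :: 'a set)" "connected_graph mu"
  shows "\<exists>y. adj mu (x::'a) y"
proof -
  have "UNIV \<noteq> {x}" using assms(2) by (metis finite.emptyI finite_insert)
  then obtain y where "y \<noteq> x" by auto
  have "(adj mu)\<^sup>*\<^sup>* x y" using assms(3) by (simp add: connected_graph_def)
  then show ?thesis using \<open>y \<noteq> x\<close> by (metis converse_rtranclpE)
qed

lemma vmeas_pos:
  assumes "weighted_graph mu" "infinite (UNIV :: 'a set)" "connected_graph mu" "locally_finite mu"
  shows "vmeas mu (x::'a) > 0"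
proof -
  obtain y where y: "adj mu x y" using has_nbr[OF assms(1-3)] by metis
  have f: "finite (nbrs mu x)" using assms(4) unfolding locally_finite_def by blast
  have yn: "y \<in> nbrs mu x" using y unfolding nbrs_def by simp
  have pos: "mu x y > 0" using y unfolding adj_def by simp
  have nn: "\<And>z. z \<in> nbrs mu x \<Longrightarrow> 0 \<le> mu x z" unfolding nbrs_def adj_def by simp
  have "mu x y \<le> (\<Sum>z\<in>nbrs mu x. mu x z)"
    by (rule member_le_sum) (use yn nn f in auto)
  then show ?thesis unfolding vmeas_def using pos by linarith
qed

lemma tp_sum:
  assumes "vmeas mu x > 0"
  shows "(\<Sum>y\<in>nbrs mu x. trans_prob mu x y) = 1"
proof -
  have "(\<Sum>y\<in>nbrs mu x. trans_prob mu x y) = (\<Sum>y\<in>nbrs mu x. mu x y) / vmeas mu x"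
    unfolding trans_prob_def by (rule sum_divide_distrib[symmetric])
  then show ?thesis using assms unfolding vmeas_def by simp
qed

lemma tp_nonneg: "weighted_graph mu \<Longrightarrow> 0 \<le> vmeas mu x \<Longrightarrow> trans_prob mu x y \<ge> 0"
  by (simp add: trans_prob_def wg_nonneg)

lemma finite_relpow:
  assumes "locally_finite mu"
  shows "finite {y. (adj mu ^^ n) x y}"
proof (induction n)
  case 0 then show ?case by simp
next
  case (Suc n)
  have "{y. (adj mu ^^ Suc n) x y} \<subseteq> (\<Union>z\<in>{y. (adj mu ^^ n) x y}. nbrs mu z)"
    by (auto simp: nbrs_def)
  moreover have "finite (\<Union>z\<in>{y. (adj mu ^^ n) x y}. nbrs mu z)"
    using Suc assms by (simp add: locally_finite_def)
  ultimately show ?case by (rule finite_subset)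
qed

lemma gdist_relpow:
  assumes "connected_graph mu"
  shows "(adj mu ^^ gdist mu x y) x y"
proof -
  have "(adj mu)\<^sup>*\<^sup>* x y" using assms by (simp add: connected_graph_def)
  then obtain n where "(adj mu ^^ n) x y" using rtranclp_imp_relpowp by metis
  then show ?thesis unfolding gdist_def by (rule LeastI)
qed

lemma finite_ball:
  assumes "connected_graph mu" "locally_finite mu"
  shows "finite (gball mu x R)"
proof -
  have "gball mu x R \<subseteq> (\<Union>n\<in>{..R}. {y. (adj mu ^^ n) x y})"
    using gdist_relpow[OF assms(1)] by (force simp: gball_def)
  then show ?thesis using finite_relpow[OF assms(2)] by (meson finite_UN_I finite_atMost finite_subset)
qed

lemma center_in_ball: "x \<in> gball mu x R"
proof -
  have "gdist mu x x = 0" unfolding gdist_def by (rule Least_eq_0) simp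
  then show ?thesis by (simp add: gball_def)
qed

lemma kp_nonneg:
  assumes "weighted_graph mu"
  shows "0 \<le> killed_prob mu U n x y"
proof (induction n arbitrary: y)
  case 0 then show ?case by simp
next
  case (Suc n)
  have vm: "\<And>z. 0 \<le> vmeas mu z" unfolding vmeas_def using wg_nonneg[OF assms] by (simp add: sum_nonneg)
  show ?case using Suc tp_nonneg[OF assms vm] by (auto intro!: sum_nonneg)
qed

lemma kp_out: "y \<notin> U \<Longrightarrow> killed_prob mu U n x y = 0"
  by (cases n) auto

lemma kp_summable:
  assumes wg: "weighted_graph mu" and fin: "finite U"
    and hnn: "\<And>y. 0 \<le> h y"
    and hyp: "\<And>z. z \<in> U \<Longrightarrow> (\<Sum>y\<in>U. trans_prob mu z y * h y) \<le> h z - 1"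
  shows "summable (\<lambda>n. killed_prob mu U n x y)"
proof -
  let ?kp = "killed_prob mu U"
  define M where "M n = (\<Sum>y\<in>U. ?kp n x y * h y)" for n
  define m where "m n = (\<Sum>y\<in>U. ?kp n x y)" for n
  have kn: "\<And>n y. 0 \<le> ?kp n x y" by (rule kp_nonneg[OF wg])
  have step: "M (Suc n) \<le> M n - m n" for n
  proof -
    have "M (Suc n) = (\<Sum>y\<in>U. (\<Sum>z\<in>U. ?kp n x z * trans_prob mu z y) * h y)"
      unfolding M_def by (intro sum.cong) auto
    also have "\<dots> = (\<Sum>y\<in>U. \<Sum>z\<in>U. ?kp n x z * (trans_prob mu z y * h y))"
      by (simp add: sum_distrib_right mult.assoc)
    also have "\<dots> = (\<Sum>z\<in>U. \<Sum>y\<in>U. ?kp n x z * (trans_prob mu z y * h y))"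
      by (rule sum.swap)
    also have "\<dots> = (\<Sum>z\<in>U. ?kp n x z * (\<Sum>y\<in>U. trans_prob mu z y * h y))"
      by (simp add: sum_distrib_left)
    also have "\<dots> \<le> (\<Sum>z\<in>U. ?kp n x z * (h z - 1))"
      by (intro sum_mono mult_left_mono hyp kn)
    also have "\<dots> = M n - m n"
      unfolding M_def m_def by (simp add: right_diff_distrib sum_subtractf)
    finally show ?thesis .
  qed
  have Mnn: "0 \<le> M n" for n unfolding M_def using kn hnn by (simp add: sum_nonneg)
  have acc: "(\<Sum>i<N. m i) + M N \<le> M 0" for N
  proof (induction N)
    case 0 then show ?case by simp
  next
    case (Suc N) then show ?case using step[of N] by simp
  qed
  have bd: "(\<Sum>i<N. m i) \<le> M 0" for N using acc[of N] Mnn[of N] by linarith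
  have le: "?kp n x y \<le> m n" for n
  proof (cases "y \<in> U")
    case True
    then show ?thesis unfolding m_def using fin kn by (intro member_le_sum) auto
  next
    case False
    then show ?thesis unfolding m_def using kn kp_out[OF False] by (simp add: sum_nonneg)
  qed
  show ?thesis
  proof (rule bounded_imp_summable)
    show "0 \<le> ?kp n x y" for n by (rule kn)
    show "(\<Sum>k\<le>n. ?kp k x y) \<le> M 0" for n
    proof -
      have "(\<Sum>k\<le>n. ?kp k x y) \<le> (\<Sum>k\<le>n. m k)" by (intro sum_mono le)
      also have "\<dots> = (\<Sum>k<Suc n. m k)" by (simp add: lessThan_Suc_atMost)
      also have "\<dots> \<le> M 0" by (rule bd)
      finally show ?thesis .
    qed
  qed
qed

lemma green_identity:
  assumes wg: "weighted_graph mu" and fin: "finite U" and yU: "y \<in> U"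
    and sm: "\<And>z. summable (\<lambda>n. killed_prob mu U n x z)"
  shows "(\<Sum>n. killed_prob mu U n x y) = (if x \<in> U \<and> y = x then 1 else 0)
           + (\<Sum>z\<in>U. (\<Sum>n. killed_prob mu U n x z) * trans_prob mu z y)"
proof -
  let ?kp = "killed_prob mu U"
  have "(\<Sum>n. ?kp (Suc n) x y) = (\<Sum>n. ?kp n x y) - ?kp 0 x y"
    by (rule suminf_split_head[OF sm])
  moreover have "(\<Sum>n. ?kp (Suc n) x y) = (\<Sum>n. \<Sum>z\<in>U. ?kp n x z * trans_prob mu z y)"
    using yU by simp
  moreover have "\<dots> = (\<Sum>z\<in>U. \<Sum>n. ?kp n x z * trans_prob mu z y)"
    by (rule suminf_sum) (intro summable_mult2 sm)
  moreover have "\<dots> = (\<Sum>z\<in>U. (\<Sum>n. ?kp n x z) * trans_prob mu z y)"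
    by (intro sum.cong refl suminf_mult2[symmetric] sm)
  ultimately show ?thesis by simp
qed

lemma lyap_arith:
  fixes t K a b p :: real
  assumes "p \<le> t" "b \<le> a" "0 \<le> K" "K*(1-p)*b = 1"
  shows "t*(K*(1-a)) + (1-t)*(K*(1-b)) \<le> K*(1-p*a) - 1"
proof -
  have eq: "K*(1-p*a) - 1 - (t*(K*(1-a)) + (1-t)*(K*(1-b))) = K*((t-p)*(a-b)) + (K*(1-p)*b - 1)"
    by (simp add: algebra_simps)
  have "0 \<le> K*((t-p)*(a-b))" using assms by simp
  then show ?thesis using eq assms(4) by linarith
qed

lemma lyapunov_exists:
  assumes wg: "weighted_graph mu" and inf: "infinite (UNIV :: 'a set)"
    and conn: "connected_graph mu" and lf: "locally_finite mu" and fin: "finite (U::'a set)"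
  shows "\<exists>h. (\<forall>y. 0 \<le> h y) \<and> (\<forall>z\<in>U. (\<Sum>y\<in>U. trans_prob mu z y * h y) \<le> h z - 1)"
proof (cases "U = {}")
  case True then show ?thesis by (intro exI[of _ "\<lambda>_. 0"]) simp
next
  case Une: False
  have vpos: "\<And>x. vmeas mu x > 0" using vmeas_pos[OF wg inf conn lf] .
  obtain y0 where y0: "y0 \<notin> U" using inf fin by (metis ex_new_if_finite)
  define e where "e x = (LEAST n. \<exists>y. y \<notin> U \<and> (adj mu ^^ n) x y)" for x
  have eex: "\<exists>n y. y \<notin> U \<and> (adj mu ^^ n) x y" for x
  proof -
    have "(adj mu)\<^sup>*\<^sup>* x y0" using conn by (simp add: connected_graph_def)
    then obtain n where "(adj mu ^^ n) x y0" using rtranclp_imp_relpowp by metis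
    then show ?thesis using y0 by blast
  qed
  have e_out: "e x = 0" if "x \<notin> U" for x
    unfolding e_def by (rule Least_eq_0) (use that in auto)
  have e_step: "\<exists>y. adj mu x y \<and> Suc (e y) \<le> e x" if xU: "x \<in> U" for x
  proof -
    have "\<exists>y. y \<notin> U \<and> (adj mu ^^ e x) x y" unfolding e_def by (rule LeastI_ex) (rule eex)
    then obtain y where y: "y \<notin> U" "(adj mu ^^ e x) x y" by blast
    show ?thesis
    proof (cases "e x")
      case 0 then show ?thesis using y xU by auto
    next
      case (Suc m)
      then obtain z where z: "adj mu x z" "(adj mu ^^ m) z y" using y(2) relpowp_Suc_D2 by metis
      have "e z \<le> m" unfolding e_def by (rule Least_le) (use z y in blast)
      then show ?thesis using z Suc by auto
    qed
  qed
  define E where "E = Max (e ` U)"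
  have eE: "e y \<le> E" for y
  proof (cases "y \<in> U")
    case True then show ?thesis unfolding E_def using fin by auto
  next
    case False then show ?thesis using e_out by simp
  qed
  define S where "S = (\<Union>x\<in>U. trans_prob mu x ` nbrs mu x)"
  have Sfin: "finite S" unfolding S_def using fin lf by (auto simp: locally_finite_def)
  obtain x1 where x1: "x1 \<in> U" using Une by auto
  obtain y1 where "adj mu x1 y1" using has_nbr[OF wg inf conn] by blast
  then have "trans_prob mu x1 y1 \<in> S" unfolding S_def nbrs_def using x1 by auto
  then have Sne: "S \<noteq> {}" by auto
  have Spos: "\<forall>s\<in>S. 0 < s" unfolding S_def nbrs_def adj_def trans_prob_def using vpos by auto
  define p where "p = min (1/2) (Min S)"
  have p0: "0 < p" unfolding p_def using Spos Sfin Sne by auto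
  have p1: "p \<le> 1/2" unfolding p_def by simp
  have ple: "p \<le> trans_prob mu x y" if "x \<in> U" "y \<in> nbrs mu x" for x y
  proof -
    have "trans_prob mu x y \<in> S" unfolding S_def using that by auto
    then have "Min S \<le> trans_prob mu x y" using Sfin by simp
    then show ?thesis unfolding p_def by simp
  qed
  define K where "K = 1 / ((1-p) * p^E)"
  have Kpos: "0 < K" unfolding K_def using p0 p1 by simp
  have KE: "K * (1-p) * p^E = 1" unfolding K_def using p0 p1 by simp
  define h where "h y = K * (1 - p ^ e y)" for y
  have hnn: "0 \<le> h y" for y
  proof -
    have "p ^ e y \<le> 1" using p0 p1 by (simp add: power_le_one)
    then show ?thesis unfolding h_def using Kpos by simp
  qed
  have hmax: "h y \<le> K * (1 - p^E)" for y
  proof -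
    have "p ^ E \<le> p ^ e y" using p0 p1 eE[of y] by (simp add: power_decreasing)
    then show ?thesis unfolding h_def using Kpos by (simp add: mult_left_mono)
  qed
  have "\<forall>z\<in>U. (\<Sum>y\<in>U. trans_prob mu z y * h y) \<le> h z - 1"
  proof
    fix z assume zU: "z \<in> U"
    obtain ys where ys: "adj mu z ys" "Suc (e ys) \<le> e z" using e_step[OF zU] by blast
    have ysn: "ys \<in> nbrs mu z" using ys by (simp add: nbrs_def)
    have nfin: "finite (nbrs mu z)" using lf by (simp add: locally_finite_def)
    have "(\<Sum>y\<in>U. trans_prob mu z y * h y) = (\<Sum>y\<in>U \<union> nbrs mu z. trans_prob mu z y * h y)"
    proof (rule sum.mono_neutral_left)
      show "finite (U \<union> nbrs mu z)" using fin nfin by simp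
      show "U \<subseteq> U \<union> nbrs mu z" by simp
      show "\<forall>i\<in>U \<union> nbrs mu z - U. trans_prob mu z i * h i = 0"
        using e_out unfolding h_def by simp
    qed
    also have "\<dots> = (\<Sum>y\<in>nbrs mu z. trans_prob mu z y * h y)"
    proof (rule sum.mono_neutral_right)
      show "finite (U \<union> nbrs mu z)" using fin nfin by simp
      show "nbrs mu z \<subseteq> U \<union> nbrs mu z" by simp
      show "\<forall>i\<in>U \<union> nbrs mu z - nbrs mu z. trans_prob mu z i * h i = 0"
        using not_nbr_zero[OF wg] unfolding trans_prob_def by simp
    qed
    also have "\<dots> = trans_prob mu z ys * h ys + (\<Sum>y\<in>nbrs mu z - {ys}. trans_prob mu z y * h y)"
      by (rule sum.remove[OF nfin ysn])
    also have "\<dots> \<le> trans_prob mu z ys * (K * (1 - p^(e z - 1)))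
         + (1 - trans_prob mu z ys) * (K * (1 - p^E))"
    proof (rule add_mono)
      have "p ^ (e z - 1) \<le> p ^ e ys" using p0 p1 ys(2) by (intro power_decreasing) auto
      then have "h ys \<le> K * (1 - p^(e z - 1))" unfolding h_def using Kpos by (simp add: mult_left_mono)
      then show "trans_prob mu z ys * h ys \<le> trans_prob mu z ys * (K * (1 - p^(e z - 1)))"
        using tp_nonneg[OF wg, of z ys] vpos[of z] by (simp add: mult_left_mono less_imp_le)
      have "(\<Sum>y\<in>nbrs mu z - {ys}. trans_prob mu z y * h y)
          \<le> (\<Sum>y\<in>nbrs mu z - {ys}. trans_prob mu z y * (K * (1 - p^E)))"
        using tp_nonneg[OF wg] vpos hmax by (intro sum_mono mult_left_mono) (auto simp: less_imp_le)
      also have "\<dots> = (\<Sum>y\<in>nbrs mu z - {ys}. trans_prob mu z y) * (K * (1 - p^E))"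
        by (simp add: sum_distrib_right)
      also have "(\<Sum>y\<in>nbrs mu z - {ys}. trans_prob mu z y) = 1 - trans_prob mu z ys"
        using sum.remove[OF nfin ysn, of "trans_prob mu z"] tp_sum[OF vpos[of z]] by simp
      finally show "(\<Sum>y\<in>nbrs mu z - {ys}. trans_prob mu z y * h y) \<le> (1 - trans_prob mu z ys) * (K * (1 - p^E))" .
    qed
    also have "\<dots> \<le> K * (1 - p * p^(e z - 1)) - 1"
    proof (rule lyap_arith)
      show "p \<le> trans_prob mu z ys" using ple[OF zU ysn] .
      show "p^E \<le> p^(e z - 1)" using p0 p1 eE[of z] by (intro power_decreasing) auto
      show "0 \<le> K" using Kpos by simp
      show "K * (1 - p) * p ^ E = 1" by (rule KE)
    qed
    also have "p * p^(e z - 1) = p ^ e z" using ys(2)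
      by (metis Suc_le_D diff_Suc_1 power_Suc)
    finally show "(\<Sum>y\<in>U. trans_prob mu z y * h y) \<le> h z - 1" unfolding h_def .
  qed
  then show ?thesis using hnn by blast
qed

lemma young_q:
  fixes q x y :: real
  assumes q: "q > 1" and x: "0 \<le> x" and y: "0 \<le> y"
  shows "q * (x * y powr (q-1)) \<le> x powr q + (q-1) * y powr q"
proof -
  have "x * y powr (q-1) \<le> x powr q / q + (y powr (q-1)) powr (q/(q-1)) / (q/(q-1))"
    by (rule Youngs_inequality) (use q x y in \<open>auto simp: field_simps\<close>)
  also have "(y powr (q-1)) powr (q/(q-1)) = y powr q"
    using q by (simp add: powr_powr)
  finally have "x * y powr (q-1) \<le> x powr q / q + y powr q / (q/(q-1))" .
  then have "q * (x * y powr (q-1)) \<le> q * (x powr q / q + y powr q / (q/(q-1)))"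
    using q by simp
  also have "\<dots> = x powr q + (q-1) * y powr q" using q by (simp add: field_simps)
  finally show ?thesis .
qed

lemma powr_q_split:
  fixes q w :: real
  assumes "0 \<le> w"
  shows "w powr q = w * w powr (q-1)"
proof (cases "w = 0")
  case True then show ?thesis by simp
next
  case False
  have "w powr q = w powr (1 + (q-1))" by simp
  also have "\<dots> = w powr 1 * w powr (q-1)" by (rule powr_add)
  also have "w powr 1 = w" using assms by simp
  finally show ?thesis .
qed

lemma edge_ineq:
  fixes q u1 u2 w1 w2 :: real
  assumes q: "q > 1" and u: "0 \<le> u1" "0 \<le> u2" and w: "0 \<le> w1" "0 \<le> w2"
  shows "(w1 powr q - w2 powr q) * (u1 - u2)
     \<le> q/(q-1) * ((u1*w1 - u2*w2) * (w1 powr (q-1) - w2 powr (q-1)))"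
proof -
  define r1 where "r1 = w1 powr (q-1)"
  define r2 where "r2 = w2 powr (q-1)"
  define t1 where "t1 = w1 powr q"
  define t2 where "t2 = w2 powr q"
  have t1s: "t1 = w1 * r1" unfolding t1_def r1_def by (rule powr_q_split[OF w(1)])
  have t2s: "t2 = w2 * r2" unfolding t2_def r2_def by (rule powr_q_split[OF w(2)])
  have Y1: "q * (w1 * r2) \<le> t1 + (q-1) * t2" unfolding t1_def t2_def r2_def by (rule young_q[OF q w])
  have Y2: "q * (w2 * r1) \<le> t2 + (q-1) * t1" unfolding t1_def t2_def r1_def by (rule young_q[OF q w(2) w(1)])
  have id: "q*((u1*w1-u2*w2)*(r1-r2)) - (q-1)*((t1-t2)*(u1-u2))
      = u1*(t1 + (q-1)*t2 - q*(w1*r2)) + u2*(t2+(q-1)*t1 - q*(w2*r1))"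
    unfolding t1s t2s by (simp add: algebra_simps)
  have "0 \<le> u1*(t1 + (q-1)*t2 - q*(w1*r2)) + u2*(t2+(q-1)*t1 - q*(w2*r1))"
    using Y1 Y2 u by (intro add_nonneg_nonneg mult_nonneg_nonneg) auto
  then have "(t1-t2)*(u1-u2)*(q-1) \<le> q*((u1*w1-u2*w2)*(r1-r2))"
    using id by (simp add: algebra_simps)
  then have "(t1-t2)*(u1-u2) \<le> q*((u1*w1-u2*w2)*(r1-r2)) / (q-1)"
    using q by (simp add: pos_le_divide_eq)
  then show ?thesis unfolding r1_def r2_def t1_def t2_def by simp
qed

lemma green_formula:
  assumes wg: "weighted_graph mu" and fin: "finite N"
    and fB: "\<And>x. x \<notin> B \<Longrightarrow> f x = 0" and BN: "B \<subseteq> N"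
    and nN: "\<And>x. x \<in> B \<Longrightarrow> nbrs mu x \<subseteq> N"
  shows "(\<Sum>x\<in>N. \<Sum>y\<in>N. mu x y * ((f x - f y) * (g x - g y)))
       = 2 * (\<Sum>x\<in>B. f x * (\<Sum>y\<in>nbrs mu x. mu x y * (g x - g y)))"
proof -
  define A where "A = (\<Sum>x\<in>N. \<Sum>y\<in>N. mu x y * (f x * (g x - g y)))"
  define Bv where "Bv = (\<Sum>x\<in>N. \<Sum>y\<in>N. mu x y * (f y * (g x - g y)))"
  have "(\<Sum>x\<in>N. \<Sum>y\<in>N. mu x y * ((f x - f y) * (g x - g y))) = A - Bv"
  proof -
    have "(\<Sum>x\<in>N. \<Sum>y\<in>N. mu x y * ((f x - f y) * (g x - g y)))
        = (\<Sum>x\<in>N. \<Sum>y\<in>N. mu x y * (f x * (g x - g y)) - mu x y * (f y * (g x - g y)))"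
      by (intro sum.cong refl) (simp add: algebra_simps)
    also have "\<dots> = (\<Sum>x\<in>N. (\<Sum>y\<in>N. mu x y * (f x * (g x - g y))) - (\<Sum>y\<in>N. mu x y * (f y * (g x - g y))))"
      by (simp only: sum_subtractf)
    also have "\<dots> = A - Bv" unfolding A_def Bv_def by (simp only: sum_subtractf)
    finally show ?thesis .
  qed
  moreover have "Bv = - A"
  proof -
    have "Bv = (\<Sum>y\<in>N. \<Sum>x\<in>N. mu x y * (f y * (g x - g y)))"
      unfolding Bv_def by (rule sum.swap)
    also have "\<dots> = (\<Sum>y\<in>N. \<Sum>x\<in>N. - (mu y x * (f y * (g y - g x))))"
      using wg_sym[OF wg] by (intro sum.cong refl) (simp add: algebra_simps)
    also have "\<dots> = - A" unfolding A_def by (simp add: sum_negf)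
    finally show ?thesis .
  qed
  moreover have "A = (\<Sum>x\<in>B. f x * (\<Sum>y\<in>nbrs mu x. mu x y * (g x - g y)))"
  proof -
    have "A = (\<Sum>x\<in>N. f x * (\<Sum>y\<in>N. mu x y * (g x - g y)))"
      unfolding A_def by (simp add: sum_distrib_left algebra_simps)
    also have "\<dots> = (\<Sum>x\<in>B. f x * (\<Sum>y\<in>N. mu x y * (g x - g y)))"
      by (rule sum.mono_neutral_right[OF fin BN]) (use fB in auto)
    also have "\<dots> = (\<Sum>x\<in>B. f x * (\<Sum>y\<in>nbrs mu x. mu x y * (g x - g y)))"
    proof (rule sum.cong[OF refl])
      fix x assume xB: "x \<in> B"
      have "(\<Sum>y\<in>N. mu x y * (g x - g y)) = (\<Sum>y\<in>nbrs mu x. mu x y * (g x - g y))"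
        by (rule sum.mono_neutral_right[OF fin nN[OF xB]]) (use not_nbr_zero[OF wg] in auto)
      then show "f x * (\<Sum>y\<in>N. mu x y * (g x - g y)) = f x * (\<Sum>y\<in>nbrs mu x. mu x y * (g x - g y))"
        by simp
    qed
    finally show ?thesis .
  qed
  ultimately show ?thesis by simp
qed

lemma lap_eq:
  assumes "vmeas mu x > 0"
  shows "vmeas mu x * (- laplacian mu u x) = (\<Sum>y\<in>nbrs mu x. mu x y * (u x - u y))"
proof -
  have "(\<Sum>y\<in>nbrs mu x. mu x y * (u x - u y)) = - (\<Sum>y\<in>nbrs mu x. mu x y * (u y - u x))"
    by (simp add: sum_negf[symmetric] algebra_simps)
  then show ?thesis using assms unfolding laplacian_def by simp
qed

lemma u_pos:
  assumes wg: "weighted_graph mu" and conn: "connected_graph mu" and lf: "locally_finite mu"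
    and vpos: "\<And>x. vmeas mu x > 0"
    and unn: "\<And>x. u x \<ge> 0" and snn: "\<And>x. \<sigma> x \<ge> 0"
    and sup: "\<And>x. - laplacian mu u x \<ge> \<sigma> x * u x powr q"
    and u0: "u x0 > 0"
  shows "u x > 0"
proof -
  have "(adj mu)\<^sup>*\<^sup>* x0 x" using conn by (simp add: connected_graph_def)
  then show ?thesis
  proof (induction rule: rtranclp_induct)
    case base then show ?case by (rule u0)
  next
    case (step y z)
    show ?case
    proof (rule ccontr)
      assume "\<not> u z > 0"
      then have uz: "u z = 0" using unn[of z] by simp
      have "0 \<le> - laplacian mu u z" using sup[of z] uz by simp
      then have "0 \<le> vmeas mu z * (- laplacian mu u z)"
        using vpos[of z] by (intro mult_nonneg_nonneg) auto
      then have s0: "0 \<le> (\<Sum>v\<in>nbrs mu z. mu z v * (u z - u v))" using lap_eq[OF vpos[of z], of u] by simp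
      have yn: "y \<in> nbrs mu z" using adj_sym[OF wg step(2)] by (simp add: nbrs_def)
      have fin: "finite (nbrs mu z)" using lf by (simp add: locally_finite_def)
      have "mu z y * u y \<le> (\<Sum>v\<in>nbrs mu z. mu z v * u v)"
        by (rule member_le_sum) (use yn fin unn wg_nonneg[OF wg] in auto)
      moreover have "(\<Sum>v\<in>nbrs mu z. mu z v * (u z - u v)) = - (\<Sum>v\<in>nbrs mu z. mu z v * u v)"
        using uz by (simp add: sum_negf[symmetric])
      moreover have "mu z y > 0" using yn by (simp add: nbrs_def adj_def)
      ultimately show False using s0 step(3) by (smt (verit) mult_pos_pos)
    qed
  qed
qed

lemma final_alg:
  fixes q U a0 T s :: real
  assumes q: "q > 1" and U: "U > 0" and a0: "a0 > 0" and T: "T > 0" and s: "s \<ge> 0"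
    and hT1: "T \<le> q/(q-1) * (a0/U) powr (q-1)" and hT2: "a0 powr q * s \<le> T"
  shows "U powr q * s \<le> (q/(q-1)) powr (q/(q-1)) * T powr (- 1 / (q-1))"
proof -
  define X where "X = U / a0"
  define K1 where "K1 = q/(q-1)"
  have X0: "X > 0" unfolding X_def using U a0 by simp
  have K0: "K1 > 0" unfolding K1_def using q by simp
  have inv: "(a0/U) powr (q-1) * X powr (q-1) = 1"
  proof -
    have "(a0/U) powr (q-1) * X powr (q-1) = ((a0/U) * X) powr (q-1)"
      using U a0 X0 by (intro powr_mult[symmetric])
    also have "(a0/U) * X = 1" unfolding X_def using U a0 by simp
    finally show ?thesis by simp
  qed
  have "T * X powr (q-1) \<le> (K1 * (a0/U) powr (q-1)) * X powr (q-1)"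
    using hT1 X0 unfolding K1_def by (intro mult_right_mono) auto
  also have "\<dots> = K1 * ((a0/U) powr (q-1) * X powr (q-1))" by (simp only: mult.assoc)
  finally have "T * X powr (q-1) \<le> K1 * ((a0/U) powr (q-1) * X powr (q-1))" .
  then have "T * X powr (q-1) \<le> K1" using inv by simp
  then have hX: "X powr (q-1) \<le> K1 / T" using T by (simp add: pos_le_divide_eq mult.commute)
  have "X powr q = (X powr (q-1)) powr (q/(q-1))" using q by (simp add: powr_powr)
  also have "\<dots> \<le> (K1/T) powr (q/(q-1))"
    by (rule powr_mono2) (use q X0 hX in auto)
  finally have hXq: "X powr q \<le> (K1/T) powr (q/(q-1))" .
  have UX: "U powr q = X powr q * a0 powr q"
  proof -
    have "U = X * a0" unfolding X_def using a0 by simp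
    then show ?thesis using X0 a0 by (simp add: powr_mult)
  qed
  have "U powr q * s = X powr q * (a0 powr q * s)" using UX by simp
  also have "\<dots> \<le> X powr q * T" using hT2 X0 by (simp add: mult_left_mono)
  also have "\<dots> \<le> (K1/T) powr (q/(q-1)) * T" using hXq T by (simp add: mult_right_mono)
  also have "\<dots> = K1 powr (q/(q-1)) * (T / T powr (q/(q-1)))"
    using K0 T by (simp add: powr_divide)
  also have "T / T powr (q/(q-1)) = T powr (- 1 / (q-1))"
  proof -
    have "T powr (- 1 / (q-1)) = T powr (1 - q/(q-1))" using q by (simp add: field_simps)
    also have "\<dots> = T powr 1 / T powr (q/(q-1))" by (rule powr_diff)
    finally show ?thesis using T by simp
  qed
  finally show ?thesis unfolding K1_def .
qed

theorem lemma4p2: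
  fixes mu :: "'a \<Rightarrow> 'a \<Rightarrow> real" and u \<sigma> :: "'a \<Rightarrow> real" and q :: real
    and x0 :: 'a and R :: nat
  assumes "weighted_graph mu" and "infinite (UNIV :: 'a set)"
    and "connected_graph mu" and "locally_finite mu"
    and "q > 1"
    and "\<And>x. \<sigma> x \<ge> 0"
    and "\<And>x. u x \<ge> 0"
    and "\<And>x. - laplacian mu u x \<ge> \<sigma> x * u x powr q"
    and "R \<ge> 1"
  shows "(\<Sum>y\<in>gball mu x0 R. green mu (gball mu x0 R) x0 y powr q * \<sigma> y * vmeas mu y) > 0 \<longrightarrow>
     u x0 powr q * \<sigma> x0 * vmeas mu x0
      \<le> (q / (q - 1)) powr (q / (q - 1))
         * (\<Sum>y\<in>gball mu x0 R. green mu (gball mu x0 R) x0 y powr q * \<sigma> y * vmeas mu y)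
             powr (- 1 / (q - 1))"
proof -
  note wg = assms(1) and inf = assms(2) and conn = assms(3) and lf = assms(4) and q = assms(5)
    and snn = assms(6) and unn = assms(7) and sup = assms(8)
  define B where "B = gball mu x0 R"
  define a where "a y = green mu B x0 y" for y
  define T where "T = (\<Sum>y\<in>B. a y powr q * \<sigma> y * vmeas mu y)"
  define k where "k y = (\<Sum>n. killed_prob mu B n x0 y)" for y
  have vpos: "\<And>x. vmeas mu x > 0" using vmeas_pos[OF wg inf conn lf] .
  have finB: "finite B" unfolding B_def by (rule finite_ball[OF conn lf])
  have x0B: "x0 \<in> B" unfolding B_def by (rule center_in_ball)
  obtain h where h: "\<forall>y. 0 \<le> h y" "\<forall>z\<in>B. (\<Sum>y\<in>B. trans_prob mu z y * h y) \<le> h z - 1"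
    using lyapunov_exists[OF wg inf conn lf finB] by blast
  have sm: "\<And>z. summable (\<lambda>n. killed_prob mu B n x0 z)"
    by (rule kp_summable[where h=h, OF wg finB]) (use h in auto)
  have knn: "0 \<le> k z" for z unfolding k_def
    by (rule suminf_nonneg[OF sm]) (rule kp_nonneg[OF wg])
  have a_in: "a z = k z / vmeas mu z" if "z \<in> B" for z
    unfolding a_def green_def k_def using that x0B by simp
  have a_out: "a z = 0" if "z \<notin> B" for z
    unfolding a_def green_def using that by simp
  have ann: "0 \<le> a z" for z
    by (cases "z \<in> B") (use a_in a_out knn vpos in \<open>auto intro: divide_nonneg_pos\<close>)
  have aid: "(\<Sum>y\<in>nbrs mu x. mu x y * (a x - a y)) = (if x = x0 then 1 else 0)" if xB: "x \<in> B" for x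
  proof -
    have nfin: "finite (nbrs mu x)" using lf by (simp add: locally_finite_def)
    have gi: "k x = (if x0 \<in> B \<and> x = x0 then 1 else 0) + (\<Sum>z\<in>B. k z * trans_prob mu z x)"
      unfolding k_def by (rule green_identity[OF wg finB xB sm])
    have "(\<Sum>z\<in>B. k z * trans_prob mu z x) = (\<Sum>z\<in>B. mu x z * a z)"
    proof (rule sum.cong[OF refl])
      fix z assume zB: "z \<in> B"
      show "k z * trans_prob mu z x = mu x z * a z"
        unfolding a_in[OF zB] trans_prob_def using wg_sym[OF wg, of z x] by simp
    qed
    also have "\<dots> = (\<Sum>z\<in>B \<union> nbrs mu x. mu x z * a z)"
      by (rule sum.mono_neutral_left) (use finB nfin a_out in auto)
    also have "\<dots> = (\<Sum>z\<in>nbrs mu x. mu x z * a z)"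
      by (rule sum.mono_neutral_right) (use finB nfin not_nbr_zero[OF wg] in auto)
    finally have s1: "(\<Sum>z\<in>B. k z * trans_prob mu z x) = (\<Sum>z\<in>nbrs mu x. mu x z * a z)" .
    have vk: "vmeas mu x * a x = k x" unfolding a_in[OF xB] using vpos[of x] by simp
    have "(\<Sum>y\<in>nbrs mu x. mu x y * (a x - a y)) = vmeas mu x * a x - (\<Sum>y\<in>nbrs mu x. mu x y * a y)"
      unfolding vmeas_def by (simp add: right_diff_distrib sum_subtractf sum_distrib_left sum_distrib_right mult.commute)
    also have "\<dots> = (if x = x0 then 1 else 0)" using vk gi s1 x0B by simp
    finally show ?thesis .
  qed
  have main: "T > 0 \<longrightarrow> u x0 powr q * \<sigma> x0 * vmeas mu x0
      \<le> (q / (q - 1)) powr (q / (q - 1)) * T powr (- 1 / (q - 1))"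
  proof
    assume Tpos: "T > 0"
    show "u x0 powr q * \<sigma> x0 * vmeas mu x0 \<le> (q / (q - 1)) powr (q / (q - 1)) * T powr (- 1 / (q - 1))"
    proof (cases "u x0 = 0")
      case True
      then show ?thesis by simp
    next
      case False
      then have U0: "u x0 > 0" using unn[of x0] by simp
      have upos: "\<And>x. u x > 0"
        by (rule u_pos[OF wg conn lf vpos unn snn sup U0])
      define w where "w x = a x / u x" for x
      have wnn: "0 \<le> w x" for x unfolding w_def using ann upos by (simp add: less_imp_le)
      have w_out: "w x = 0" if "x \<notin> B" for x unfolding w_def using a_out[OF that] by simp
      have aw: "a x = u x * w x" for x unfolding w_def using upos[of x] by simp
      define N where "N = B \<union> (\<Union>x\<in>B. nbrs mu x)"
      have finN: "finite N" unfolding N_def using finB lf by (auto simp: locally_finite_def)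
      have BN: "B \<subseteq> N" unfolding N_def by auto
      have nN: "\<And>x. x \<in> B \<Longrightarrow> nbrs mu x \<subseteq> N" unfolding N_def by auto
      define W where "W x = w x powr q" for x
      define F where "F x = w x powr (q-1)" for x
      have W_out: "\<And>x. x \<notin> B \<Longrightarrow> W x = 0" unfolding W_def using w_out by simp
      have F_out: "\<And>x. x \<notin> B \<Longrightarrow> F x = 0" unfolding F_def using w_out by simp
      have step1: "T \<le> (\<Sum>x\<in>B. W x * (\<Sum>y\<in>nbrs mu x. mu x y * (u x - u y)))"
        unfolding T_def
      proof (rule sum_mono)
        fix x assume "x \<in> B"
        have "a x powr q = W x * u x powr q"
          unfolding aw W_def using wnn[of x] upos[of x] by (simp add: powr_mult mult.commute)
        then have "a x powr q * \<sigma> x * vmeas mu x = W x * (vmeas mu x * (\<sigma> x * u x powr q))"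
          by (simp add: algebra_simps)
        also have "\<dots> \<le> W x * (vmeas mu x * (- laplacian mu u x))"
          using sup[of x] vpos[of x] unfolding W_def by (intro mult_left_mono) auto
        also have "\<dots> = W x * (\<Sum>y\<in>nbrs mu x. mu x y * (u x - u y))"
          using lap_eq[OF vpos[of x]] by simp
        finally show "a x powr q * \<sigma> x * vmeas mu x \<le> W x * (\<Sum>y\<in>nbrs mu x. mu x y * (u x - u y))" .
      qed
      have step2: "2 * (\<Sum>x\<in>B. W x * (\<Sum>y\<in>nbrs mu x. mu x y * (u x - u y)))
          = (\<Sum>x\<in>N. \<Sum>y\<in>N. mu x y * ((W x - W y) * (u x - u y)))"
        by (rule green_formula[OF wg finN W_out BN nN, symmetric])
      have step3: "(\<Sum>x\<in>N. \<Sum>y\<in>N. mu x y * ((W x - W y) * (u x - u y)))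
          \<le> q/(q-1) * (\<Sum>x\<in>N. \<Sum>y\<in>N. mu x y * ((F x - F y) * (a x - a y)))"
      proof -
        have "(\<Sum>x\<in>N. \<Sum>y\<in>N. mu x y * ((W x - W y) * (u x - u y)))
            \<le> (\<Sum>x\<in>N. \<Sum>y\<in>N. mu x y * (q/(q-1) * ((u x * w x - u y * w y) * (F x - F y))))"
        proof (intro sum_mono mult_left_mono)
          fix x y
          show "(W x - W y) * (u x - u y) \<le> q/(q-1) * ((u x * w x - u y * w y) * (F x - F y))"
            unfolding W_def F_def
            by (rule edge_ineq[OF q]) (use upos wnn in \<open>auto simp: less_imp_le\<close>)
          show "0 \<le> mu x y" by (rule wg_nonneg[OF wg])
        qed
        also have "\<dots> = q/(q-1) * (\<Sum>x\<in>N. \<Sum>y\<in>N. mu x y * ((F x - F y) * (a x - a y)))"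
          unfolding aw by (simp add: sum_distrib_left algebra_simps)
        finally show ?thesis .
      qed
      have step4: "(\<Sum>x\<in>N. \<Sum>y\<in>N. mu x y * ((F x - F y) * (a x - a y))) = 2 * F x0"
      proof -
        have "(\<Sum>x\<in>N. \<Sum>y\<in>N. mu x y * ((F x - F y) * (a x - a y)))
            = 2 * (\<Sum>x\<in>B. F x * (\<Sum>y\<in>nbrs mu x. mu x y * (a x - a y)))"
          by (rule green_formula[OF wg finN F_out BN nN])
        also have "(\<Sum>x\<in>B. F x * (\<Sum>y\<in>nbrs mu x. mu x y * (a x - a y)))
            = (\<Sum>x\<in>B. if x = x0 then F x else 0)"
          by (rule sum.cong[OF refl]) (simp add: aid)
        also have "\<dots> = F x0" using finB x0B by simp
        finally show ?thesis .
      qed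
      have s34: "(\<Sum>x\<in>N. \<Sum>y\<in>N. mu x y * ((W x - W y) * (u x - u y))) \<le> 2 * (q/(q-1) * F x0)"
        using step3 step4 by (simp add: mult.left_commute)
      have "T \<le> q/(q-1) * F x0" using step1 step2 s34 by linarith
      then have Tle: "T \<le> q/(q-1) * (a x0 / u x0) powr (q-1)"
        unfolding F_def w_def .
      have Tge: "a x0 powr q * (\<sigma> x0 * vmeas mu x0) \<le> T"
        unfolding T_def mult.assoc[symmetric]
        by (rule member_le_sum) (use x0B finB snn vpos in \<open>auto intro!: mult_nonneg_nonneg simp: less_imp_le\<close>)
      have a0: "a x0 > 0"
      proof (rule ccontr)
        assume "\<not> a x0 > 0"
        then have "a x0 = 0" using ann[of x0] by simp
        then show False using Tle Tpos q by simp
      qed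
      have "u x0 powr q * (\<sigma> x0 * vmeas mu x0) \<le> (q/(q-1)) powr (q/(q-1)) * T powr (- 1 / (q-1))"
        by (rule final_alg[OF q U0 a0 Tpos _ Tle Tge]) (use snn vpos in \<open>auto simp: less_imp_le\<close>)
      then show ?thesis by (simp add: mult.assoc)
    qed
  qed
  then show ?thesis unfolding T_def a_def B_def .
qed

end
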